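(* Let $d\geq 1$, $n\geq 1$ and $r\geq 2$ be integers. Then $M''(n,r,d)\le \left\lfloor \frac{d(n-1)}{r-1}\right\rfloor$.
   Context: All measures are probability measures on $\mathbb{R}^d$ absolutely continuous with respect to Lebesgue measure. A partition of $\mathbb{R}^d$ into $n$ parts formed by iterated hyperplane cuts is an ordered tuple $(K_1,\dots,K_n)$ of closed convex sets (some possibly empty) obtained by starting from the single part $\mathbb{R}^d$ and repeatedly choosing one existing part $C$ and replacing it by $C\cap H^+$ and $C\cap H^-$, where $H^+,H^-$ are the two closed half-spaces of an affine hyperplane, until there are $n$ parts. $M''(n,r,d)$ is the largest integer $M''$ such that for any $M''$ measures $\mu_1,\dots,\mu_{M''}$ on $\mathbb{R}^d$ there is such a partition $(K_1,\dots,K_n)$ and a map $\ell\colon[n]\to[r]$ with $\mu_j\big(\bigcup_{i\in\ell^{-1}(s)}K_i\big)=\tfrac1r$ for all $1\le j\le M''$ and $1\le s\le r$. *)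

theory Defs
  imports "HOL-Probability.Probability"
begin

inductive hcut_partition :: "'a::euclidean_space set list \<Rightarrow> bool" where
  base: "hcut_partition [UNIV]"
| cut: "\<lbrakk> hcut_partition Ks; i < length Ks; a \<noteq> 0 \<rbrakk> \<Longrightarrow>
     hcut_partition (Ks[i := Ks ! i \<inter> {x. a \<bullet> x \<le> b}] @ [Ks ! i \<inter> {x. a \<bullet> x \<ge> b}])"

definition admissible_measure :: "'a::euclidean_space measure \<Rightarrow> bool" where
  "admissible_measure \<mu> \<longleftrightarrow> sets \<mu> = sets lborel \<and> prob_space \<mu> \<and> absolutely_continuous lborel \<mu>"

definition fair_split_property :: "nat \<Rightarrow> nat \<Rightarrow> nat \<Rightarrow> 'a::euclidean_space itself \<Rightarrow> bool" where
  "fair_split_property n r m _ \<longleftrightarrow>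
     (\<forall>\<mu> :: nat \<Rightarrow> 'a measure. (\<forall>j<m. admissible_measure (\<mu> j)) \<longrightarrow>
        (\<exists>Ks lab. hcut_partition Ks \<and> length Ks = n \<and> (\<forall>i<n. lab i < r) \<and>
           (\<forall>j<m. \<forall>s<r. measure (\<mu> j) (\<Union>i\<in>{i. i < n \<and> lab i = s}. Ks ! i) = 1 / real r)))"

definition Mpp :: "nat \<Rightarrow> nat \<Rightarrow> 'a::euclidean_space itself \<Rightarrow> nat" where
  "Mpp n r T = (GREATEST m. fair_split_property n r m T)"

end

theory Submission
  imports Defs
begin

lemma gp_points:
  "\<exists>p::nat \<Rightarrow> 'a::euclidean_space. \<forall>T \<subseteq> {..<m}. card T \<le> DIM('a) + 1 \<longrightarrow>
      inj_on p T \<and> \<not> affine_dependent (p ` T)"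
proof (induction m)
  case 0
  show ?case by auto
next
  case (Suc m)
  then obtain p :: "nat \<Rightarrow> 'a" where p: "\<And>T. T \<subseteq> {..<m} \<Longrightarrow> card T \<le> DIM('a) + 1 \<Longrightarrow>
      inj_on p T \<and> \<not> affine_dependent (p ` T)" by blast
  let ?F = "{T. T \<subseteq> {..<m} \<and> card T \<le> DIM('a)}"
  have finF: "finite ?F" by (rule finite_subset[of _ "Pow {..<m}"]) auto
  have negl: "negligible (\<Union>T\<in>?F. affine hull (p ` T))"
  proof (rule negligible_Union)
    show "finite ((\<lambda>T. affine hull (p ` T)) ` ?F)" using finF by simp
  next
    fix S assume S0: "S \<in> (\<lambda>T. affine hull (p ` T)) ` ?F"
    show "negligible S"
    proof -
      from S0 obtain T where T: "T \<subseteq> {..<m}" "card T \<le> DIM('a)" and S: "S = affine hull (p ` T)" by auto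
      have fT: "finite T" using T(1) finite_subset by blast
      have "aff_dim (p ` T) \<le> int (card (p ` T)) - 1" using aff_dim_le_card fT by blast
      also have "\<dots> \<le> int (card T) - 1" using card_image_le[OF fT, of p] by simp
      finally have "aff_dim S < DIM('a)" using T(2) S by (simp add: aff_dim_affine_hull)
      then obtain a b where "a \<noteq> 0" "S \<subseteq> {x. a \<bullet> x = b}" using aff_lowdim_subset_hyperplane by blast
      then show "negligible S" using negligible_hyperplane negligible_subset by blast
    qed
  qed
  then obtain q where q: "q \<notin> (\<Union>T\<in>?F. affine hull (p ` T))"
    using non_negligible_UNIV by (metis UNIV_eq_I)
  define p' where "p' = p(m := q)"
  have "\<forall>T \<subseteq> {..<Suc m}. card T \<le> DIM('a) + 1 \<longrightarrow> inj_on p' T \<and> \<not> affine_dependent (p' ` T)"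
  proof (intro allI impI)
    fix T assume T: "T \<subseteq> {..<Suc m}" "card T \<le> DIM('a) + 1"
    show "inj_on p' T \<and> \<not> affine_dependent (p' ` T)"
    proof (cases "m \<in> T")
      case False
      then have T0: "T \<subseteq> {..<m}" using T(1) by (auto simp: less_Suc_eq)
      have eq: "\<And>x. x \<in> T \<Longrightarrow> p' x = p x" using False by (auto simp: p'_def)
      have "p' ` T = p ` T" using eq by auto
      moreover have "inj_on p' T \<longleftrightarrow> inj_on p T" using eq inj_on_cong by blast
      ultimately show ?thesis using p[OF T0 T(2)] by simp
    next
      case True
      define T0 where "T0 = T - {m}"
      have T0: "T0 \<subseteq> {..<m}" using T(1) by (auto simp: T0_def less_Suc_eq)
      have fT: "finite T" using T(1) finite_subset by blast
      have cT0: "card T0 \<le> DIM('a)" using T(2) True fT by (simp add: T0_def)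
      have eq: "\<And>x. x \<in> T0 \<Longrightarrow> p' x = p x" by (auto simp: p'_def T0_def)
      have Teq: "T = insert m T0" using True T0_def by auto
      have i0: "p' ` T0 = p ` T0" using eq by (simp cong: image_cong)
      have img: "p' ` T = insert q (p ` T0)" unfolding Teq image_insert i0 by (simp add: p'_def)
      have pT0: "inj_on p T0 \<and> \<not> affine_dependent (p ` T0)" using p[OF T0] cT0 by simp
      have T0F: "T0 \<in> ?F" using T0 cT0 by simp
      have sub: "affine hull (p ` T0) \<subseteq> (\<Union>T\<in>?F. affine hull (p ` T))" by (rule UN_upper[OF T0F])
      have qn: "q \<notin> affine hull (p ` T0)" using q sub by (meson subsetD)
      have qn2: "q \<notin> p ` T0"
      proof
        assume "q \<in> p ` T0"
        then have "q \<in> affine hull (p ` T0)" by (rule hull_inc)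
        with qn show False by simp
      qed
      have "inj_on p' T0" using pT0 eq inj_on_cong by blast
      moreover have "p' m \<notin> p' ` T0" using qn2 eq by (auto simp: p'_def T0_def)
      moreover have "m \<notin> T0" by (simp add: T0_def)
      ultimately have "inj_on p' T" using Teq by simp
      moreover have "\<not> affine_dependent (p' ` T)" unfolding img using affine_independent_insert[OF conjunct2[OF pT0] qn] .
      ultimately show ?thesis by simp
    qed
  qed
  then show ?case by blast
qed

lemma hyp_count:
  fixes p :: "nat \<Rightarrow> 'a::euclidean_space"
  assumes gp: "\<forall>T \<subseteq> {..<m}. card T \<le> DIM('a) + 1 \<longrightarrow> inj_on p T \<and> \<not> affine_dependent (p ` T)"
    and a: "a \<noteq> 0"
  shows "card {j. j < m \<and> a \<bullet> p j = b} \<le> DIM('a)"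
proof (rule ccontr)
  let ?S = "{j. j < m \<and> a \<bullet> p j = b}"
  assume "\<not> card ?S \<le> DIM('a)"
  then have "DIM('a) + 1 \<le> card ?S" by linarith
  then obtain T where T: "T \<subseteq> ?S" "card T = DIM('a) + 1"
    by (rule obtain_subset_with_card_n)
  have Tm: "T \<subseteq> {..<m}" using T(1) by auto
  have ind: "inj_on p T" "\<not> affine_dependent (p ` T)" using gp Tm T(2) by auto
  have "card (p ` T) = DIM('a) + 1" using card_image[OF ind(1)] T(2) by simp
  then have ad: "aff_dim (p ` T) = int DIM('a)" using aff_dim_affine_independent[OF ind(2)] by simp
  have "p ` T \<subseteq> {x. a \<bullet> x = b}" using T(1) by auto
  then have "aff_dim (p ` T) \<le> aff_dim {x. a \<bullet> x = b}" by (rule aff_dim_subset)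
  also have "\<dots> = int DIM('a) - 1" using a by simp
  finally show False using ad by simp
qed

lemma delta_T:
  fixes p :: "nat \<Rightarrow> 'a::euclidean_space"
  assumes fin: "finite T" and ne: "T \<noteq> {}"
    and nohyp: "\<And>a b. norm a = 1 \<Longrightarrow> \<exists>j\<in>T. a \<bullet> p j \<noteq> b"
  shows "\<exists>\<delta>>0. \<forall>a b. norm a = 1 \<longrightarrow> (\<exists>j\<in>T. \<delta> \<le> \<bar>a \<bullet> p j - b\<bar>)"
proof -
  define R where "R = (\<Sum>j\<in>T. norm (p j)) + 1"
  have Rj: "norm (p j) + 1 \<le> R" if "j \<in> T" for j
  proof -
    have "norm (p j) \<le> (\<Sum>j\<in>T. norm (p j))"
      using member_le_sum[OF that, of "\<lambda>j. norm (p j)"] fin by simp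
    then show ?thesis by (simp add: R_def)
  qed
  define K where "K = (sphere (0::'a) 1) \<times> cball (0::real) R"
  define g where "g = (\<lambda>z::'a \<times> real. \<Sum>j\<in>T. \<bar>fst z \<bullet> p j - snd z\<bar>)"
  have cK: "compact K" unfolding K_def by (intro compact_Times compact_sphere compact_cball)
  obtain e :: 'a where e: "e \<in> Basis" using nonempty_Basis by blast
  have Rpos: "0 \<le> R" unfolding R_def by (simp add: sum_nonneg add_nonneg_nonneg)
  have "(e, 0) \<in> K" using e Rpos by (simp add: K_def)
  then have neK: "K \<noteq> {}" by blast
  have cg: "continuous_on K g" unfolding g_def by (intro continuous_intros)
  obtain z where z: "z \<in> K" and zmin: "\<And>y. y \<in> K \<Longrightarrow> g z \<le> g y"
    using continuous_attains_inf[OF cK neK cg] by blast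
  have gpos: "0 < g z"
  proof -
    have nz: "norm (fst z) = 1" using z by (auto simp: K_def)
    obtain j where j: "j \<in> T" "fst z \<bullet> p j \<noteq> snd z" using nohyp[OF nz] by blast
    have "0 < \<bar>fst z \<bullet> p j - snd z\<bar>" using j by simp
    also have "\<dots> \<le> g z" unfolding g_def using member_le_sum[OF j(1), of "\<lambda>j. \<bar>fst z \<bullet> p j - snd z\<bar>"] fin by simp
    finally show ?thesis .
  qed
  define \<delta> where "\<delta> = min 1 (g z / real (card T))"
  have cpos: "0 < real (card T)" using fin ne by (simp add: card_gt_0_iff)
  have dpos: "0 < \<delta>" using gpos cpos by (simp add: \<delta>_def)
  have "\<forall>a b. norm a = 1 \<longrightarrow> (\<exists>j\<in>T. \<delta> \<le> \<bar>a \<bullet> p j - b\<bar>)"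
  proof (intro allI impI)
    fix a :: 'a and b :: real assume na: "norm a = 1"
    show "\<exists>j\<in>T. \<delta> \<le> \<bar>a \<bullet> p j - b\<bar>"
    proof (cases "\<bar>b\<bar> \<le> R")
      case True
      then have "(a, b) \<in> K" using na by (simp add: K_def)
      then have ge: "g z \<le> g (a, b)" by (rule zmin)
      show ?thesis
      proof (rule ccontr)
        assume "\<not> (\<exists>j\<in>T. \<delta> \<le> \<bar>a \<bullet> p j - b\<bar>)"
        then have lt: "\<And>j. j \<in> T \<Longrightarrow> \<bar>a \<bullet> p j - b\<bar> < \<delta>" by (simp add: not_le)
        have "g (a, b) < (\<Sum>j\<in>T. \<delta>)" unfolding g_def using sum_strict_mono[OF fin ne lt] by simp
        also have "\<dots> = real (card T) * \<delta>" by simp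
        also have "\<dots> \<le> real (card T) * (g z / real (card T))"
          using cpos by (intro mult_left_mono) (auto simp: \<delta>_def)
        also have "\<dots> = g z" using cpos by simp
        finally show False using ge by simp
      qed
    next
      case False
      obtain j where j: "j \<in> T" using ne by blast
      have "\<bar>a \<bullet> p j\<bar> \<le> norm a * norm (p j)" by (rule Cauchy_Schwarz_ineq2)
      then have "\<bar>a \<bullet> p j\<bar> \<le> norm (p j)" using na by simp
      then have "1 \<le> \<bar>a \<bullet> p j - b\<bar>" using Rj[OF j] False by linarith
      moreover have "\<delta> \<le> 1" by (simp add: \<delta>_def)
      ultimately have "\<delta> \<le> \<bar>a \<bullet> p j - b\<bar>" by linarith
      then show ?thesis using j by blast
    qed
  qed
  then show ?thesis using dpos by blast
qed

lemma delta_points: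
  fixes p :: "nat \<Rightarrow> 'a::euclidean_space"
  assumes gp: "\<forall>T \<subseteq> {..<m}. card T \<le> DIM('a) + 1 \<longrightarrow> inj_on p T \<and> \<not> affine_dependent (p ` T)"
  shows "\<exists>\<delta>>0. \<forall>a b. norm a = 1 \<longrightarrow> card {j. j < m \<and> \<bar>a \<bullet> p j - b\<bar> < \<delta>} \<le> DIM('a)"
proof -
  let ?F = "{T. T \<subseteq> {..<m} \<and> card T = DIM('a) + 1}"
  have finF: "finite ?F" by (rule finite_subset[of _ "Pow {..<m}"]) auto
  have "\<forall>T\<in>?F. \<exists>\<delta>>0. \<forall>a b. norm a = 1 \<longrightarrow> (\<exists>j\<in>T. \<delta> \<le> \<bar>a \<bullet> p j - b\<bar>)"
  proof
    fix T assume T: "T \<in> ?F"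
    have fT: "finite T" using T finite_subset by blast
    have neT: "T \<noteq> {}" using T by auto
    show "\<exists>\<delta>>0. \<forall>a b. norm a = 1 \<longrightarrow> (\<exists>j\<in>T. \<delta> \<le> \<bar>a \<bullet> p j - b\<bar>)"
    proof (rule delta_T[OF fT neT])
      fix a :: 'a and b assume na: "norm a = 1"
      show "\<exists>j\<in>T. a \<bullet> p j \<noteq> b"
      proof (rule ccontr)
        assume "\<not> (\<exists>j\<in>T. a \<bullet> p j \<noteq> b)"
        then have "T \<subseteq> {j. j < m \<and> a \<bullet> p j = b}" using T by auto
        then have "card T \<le> card {j. j < m \<and> a \<bullet> p j = b}" by (intro card_mono) auto
        also have "\<dots> \<le> DIM('a)" proof (rule hyp_count[OF gp])
          show "a \<noteq> 0" using na by auto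
        qed
        finally show False using T by simp
      qed
    qed
  qed
  then have "\<exists>f. \<forall>T\<in>?F. f T > 0 \<and> (\<forall>a b. norm a = 1 \<longrightarrow> (\<exists>j\<in>T. f T \<le> \<bar>a \<bullet> p j - b\<bar>))"
    by (rule bchoice)
  then obtain f where f0: "\<forall>T\<in>?F. f T > 0 \<and> (\<forall>a b. norm a = 1 \<longrightarrow> (\<exists>j\<in>T. f T \<le> \<bar>a \<bullet> p j - b\<bar>))"
    by blast
  have f: "\<And>T. T \<in> ?F \<Longrightarrow> f T > 0 \<and> (\<forall>a b. norm a = 1 \<longrightarrow> (\<exists>j\<in>T. f T \<le> \<bar>a \<bullet> p j - b\<bar>))"
    using f0 by blast
  define \<delta> where "\<delta> = Min (insert 1 (f ` ?F))"
  have f1: "\<And>T. T \<in> ?F \<Longrightarrow> 0 < f T" using f by blast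
  have fin2: "finite (insert 1 (f ` ?F))" using finF by simp
  have allpos: "\<forall>x\<in>insert 1 (f ` ?F). 0 < x" using f1 by auto
  have dpos: "0 < \<delta>" unfolding \<delta>_def using Min_gr_iff[OF fin2] allpos by blast
  have dle: "\<And>T. T \<in> ?F \<Longrightarrow> \<delta> \<le> f T" unfolding \<delta>_def using fin2 by (intro Min_le) auto
  have "\<forall>a b. norm a = 1 \<longrightarrow> card {j. j < m \<and> \<bar>a \<bullet> p j - b\<bar> < \<delta>} \<le> DIM('a)"
  proof (intro allI impI)
    fix a :: 'a and b assume na: "norm a = 1"
    let ?S = "{j. j < m \<and> \<bar>a \<bullet> p j - b\<bar> < \<delta>}"
    show "card ?S \<le> DIM('a)"
    proof (rule ccontr)
      assume "\<not> card ?S \<le> DIM('a)"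
      then have "DIM('a) + 1 \<le> card ?S" by linarith
      then obtain T where T: "T \<subseteq> ?S" "card T = DIM('a) + 1"
        by (rule obtain_subset_with_card_n)
      have "T \<subseteq> {..<m}" using T(1) by auto
      then have TF: "T \<in> ?F" using T(2) by simp
      have "\<forall>a b. norm a = 1 \<longrightarrow> (\<exists>j\<in>T. f T \<le> \<bar>a \<bullet> p j - b\<bar>)" using f[OF TF] by blast
      then have "\<exists>j\<in>T. f T \<le> \<bar>a \<bullet> p j - b\<bar>" using na by blast
      then obtain j where j: "j \<in> T" "f T \<le> \<bar>a \<bullet> p j - b\<bar>" by blast
      have "\<bar>a \<bullet> p j - b\<bar> < \<delta>" using j(1) T(1) by auto
      then show False using j(2) dle[OF TF] by simp
    qed
  qed
  then show ?thesis using dpos by blast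
qed

lemma sum_ind_card:
  assumes "finite A"
  shows "(\<Sum>x\<in>A. if P x then 1 else 0 :: nat) = card {x\<in>A. P x}"
proof -
  have "(\<Sum>x\<in>A. if P x then 1 else 0 :: nat) = (\<Sum>x\<in>A \<inter> {x. P x}. 1) + (\<Sum>x\<in>A \<inter> - {x. P x}. 0)"
    by (rule sum.If_cases[OF assms])
  also have "\<dots> = card (A \<inter> {x. P x})" by simp
  also have "A \<inter> {x. P x} = {x\<in>A. P x}" by blast
  finally show ?thesis .
qed

lemma sum_list_update_add:
  "i < length xs \<Longrightarrow> sum_list (map g (xs[i := y])) + g (xs ! i) = sum_list (map g xs) + (g y :: nat)"
proof (induction xs arbitrary: i)
  case Nil
  then show ?case by simp
next
  case (Cons x xs)
  then show ?case by (cases i) auto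
qed

definition cntB :: "'a set \<Rightarrow> 'a set list \<Rightarrow> nat" where
  "cntB B Ks = sum_list (map (\<lambda>K. if K \<inter> B = {} then 0 else 1) Ks)"

lemma cntB_card: "cntB B Ks = card {i. i < length Ks \<and> Ks ! i \<inter> B \<noteq> {}}"
proof -
  have "cntB B Ks = (\<Sum>i\<in>{0..<length Ks}. if Ks ! i \<inter> B \<noteq> {} then 1 else 0)"
    unfolding cntB_def sum_list_sum_nth by (intro sum.cong) auto
  also have "\<dots> = card {i\<in>{0..<length Ks}. Ks ! i \<inter> B \<noteq> {}}" by (rule sum_ind_card) simp
  also have "{i\<in>{0..<length Ks}. Ks ! i \<inter> B \<noteq> {}} = {i. i < length Ks \<and> Ks ! i \<inter> B \<noteq> {}}" by auto
  finally show ?thesis .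
qed

lemma cut_near:
  fixes a p :: "'a::euclidean_space"
  assumes "x \<in> ball p \<delta>" "a \<bullet> x \<le> b" "y \<in> ball p \<delta>" "a \<bullet> y \<ge> b"
  shows "\<bar>a \<bullet> p - b\<bar> < \<delta> * norm a \<or> a = 0"
proof (cases "a = 0")
  case True then show ?thesis by simp
next
  case False
  then have na: "0 < norm a" by simp
  have dx: "norm (p - x) < \<delta>" using assms(1) by (simp add: dist_norm)
  have dy: "norm (y - p) < \<delta>" using assms(3) by (simp add: dist_norm norm_minus_commute)
  have "a \<bullet> (p - x) \<le> norm a * norm (p - x)" by (rule norm_cauchy_schwarz)
  also have "\<dots> < norm a * \<delta>" using dx na by simp
  finally have 1: "a \<bullet> p - a \<bullet> x < norm a * \<delta>" by (simp add: inner_diff_right)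
  have "a \<bullet> (y - p) \<le> norm a * norm (y - p)" by (rule norm_cauchy_schwarz)
  also have "\<dots> < norm a * \<delta>" using dy na by simp
  finally have 2: "a \<bullet> y - a \<bullet> p < norm a * \<delta>" by (simp add: inner_diff_right)
  have "\<bar>a \<bullet> p - b\<bar> < \<delta> * norm a" using 1 2 assms(2,4) by (simp add: abs_less_iff mult.commute)
  then show ?thesis by simp
qed

lemma count_bound:
  fixes p :: "nat \<Rightarrow> 'a::euclidean_space"
  assumes near: "\<forall>a b. norm a = 1 \<longrightarrow> card {j. j < m \<and> \<bar>a \<bullet> p j - b\<bar> < \<delta>} \<le> DIM('a)"
  shows "hcut_partition Ks \<Longrightarrow> (\<Sum>j<m. cntB (ball (p j) \<delta>) Ks) \<le> m + DIM('a) * (length Ks - 1)"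
proof (induction rule: hcut_partition.induct)
  case base
  have "(\<Sum>j<m. cntB (ball (p j) \<delta>) [UNIV]) \<le> (\<Sum>j<m. 1)"
    by (intro sum_mono) (simp add: cntB_def)
  then show ?case by simp
next
  case (cut Ks i a b)
  define L where "L = Ks ! i \<inter> {x. a \<bullet> x \<le> b}"
  define U where "U = Ks ! i \<inter> {x. a \<bullet> x \<ge> b}"
  define g :: "'a set \<Rightarrow> 'a set \<Rightarrow> nat" where "g = (\<lambda>B K. if K \<inter> B = {} then 0 else 1::nat)"
  define both where "both = (\<lambda>j. L \<inter> ball (p j) \<delta> \<noteq> {} \<and> U \<inter> ball (p j) \<delta> \<noteq> {})"
  have step: "cntB (ball (p j) \<delta>) (Ks[i := L] @ [U]) \<le> cntB (ball (p j) \<delta>) Ks + (if both j then 1 else 0)" for j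
  proof -
    let ?B = "ball (p j) \<delta>"
    have e1: "cntB ?B (Ks[i := L] @ [U]) = sum_list (map (g ?B) (Ks[i := L])) + g ?B U"
      by (simp add: cntB_def g_def)
    have e2: "sum_list (map (g ?B) (Ks[i := L])) + g ?B (Ks ! i) = cntB ?B Ks + g ?B L"
    proof -
      have "cntB ?B Ks = sum_list (map (g ?B) Ks)" by (simp add: cntB_def g_def)
      then show ?thesis using sum_list_update_add[OF cut.hyps(2), of "g ?B" L] by simp
    qed
    have "g ?B L + g ?B U \<le> g ?B (Ks ! i) + (if both j then 1 else 0)"
      unfolding g_def both_def L_def U_def by auto
    then show ?thesis using e1 e2 by simp
  qed
  have nz: "norm a \<noteq> 0" using cut.hyps(3) by simp
  define a' where "a' = a /\<^sub>R norm a"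
  define b' where "b' = b / norm a"
  have na': "norm a' = 1" using nz by (simp add: a'_def)
  have sub: "{j. j < m \<and> both j} \<subseteq> {j. j < m \<and> \<bar>a' \<bullet> p j - b'\<bar> < \<delta>}"
  proof
    fix j assume j: "j \<in> {j. j < m \<and> both j}"
    then obtain x y where xy: "x \<in> ball (p j) \<delta>" "a \<bullet> x \<le> b" "y \<in> ball (p j) \<delta>" "a \<bullet> y \<ge> b"
      unfolding both_def L_def U_def by blast
    have "\<bar>a \<bullet> p j - b\<bar> < \<delta> * norm a" using cut_near[OF xy] cut.hyps(3) by blast
    moreover have "a' \<bullet> p j - b' = (a \<bullet> p j - b) / norm a"
      by (simp add: a'_def b'_def divide_inverse algebra_simps)
    ultimately have "\<bar>a' \<bullet> p j - b'\<bar> < \<delta>" using nz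
      by (simp add: pos_divide_less_eq)
    then show "j \<in> {j. j < m \<and> \<bar>a' \<bullet> p j - b'\<bar> < \<delta>}" using j by simp
  qed
  have cb: "card {j. j < m \<and> both j} \<le> DIM('a)"
  proof -
    have "card {j. j < m \<and> both j} \<le> card {j. j < m \<and> \<bar>a' \<bullet> p j - b'\<bar> < \<delta>}"
      by (rule card_mono[OF _ sub]) simp
    also have "\<dots> \<le> DIM('a)" by (rule near[rule_format, OF na'])
    finally show ?thesis .
  qed
  have "(\<Sum>j<m. cntB (ball (p j) \<delta>) (Ks[i := L] @ [U]))
        \<le> (\<Sum>j<m. cntB (ball (p j) \<delta>) Ks + (if both j then 1 else 0))"
    by (intro sum_mono step)
  also have "\<dots> = (\<Sum>j<m. cntB (ball (p j) \<delta>) Ks) + (\<Sum>j\<in>{..<m}. if both j then 1 else 0)"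
    by (simp add: sum.distrib)
  also have "(\<Sum>j\<in>{..<m}. if both j then 1 else 0) = card {j\<in>{..<m}. both j}"
    by (rule sum_ind_card) simp
  also have "{j\<in>{..<m}. both j} = {j. j < m \<and> both j}" by auto
  finally have "(\<Sum>j<m. cntB (ball (p j) \<delta>) (Ks[i := L] @ [U]))
        \<le> m + DIM('a) * (length Ks - 1) + DIM('a)" using cut.IH cb by linarith
  moreover have "length Ks \<ge> 1" using cut.hyps(2) by simp
  then have "DIM('a) * (length Ks - 1) + DIM('a) = DIM('a) * length Ks"
    by (cases "length Ks") auto
  ultimately show ?case unfolding L_def U_def by simp
qed

lemma unif_adm:
  fixes c :: "'a::euclidean_space"
  assumes "0 < \<delta>"
  shows "admissible_measure (uniform_measure lborel (ball c \<delta>))"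
proof -
  have fin: "emeasure lborel (ball c \<delta>) < \<infinity>" by (rule emeasure_lborel_ball_finite)
  have "emeasure lborel (ball c \<delta>) = ennreal (measure lborel (ball c \<delta>))"
    using fin by (simp add: emeasure_eq_ennreal_measure)
  moreover have "measure lborel (ball c \<delta>) > 0" using assms by (rule content_ball_pos)
  ultimately have nz: "emeasure lborel (ball c \<delta>) \<noteq> 0" by simp
  have ps: "prob_space (uniform_measure lborel (ball c \<delta>))"
    using nz fin by (intro prob_space_uniform_measure) auto
  have ac: "absolutely_continuous lborel (uniform_measure lborel (ball c \<delta>))"
    unfolding absolutely_continuous_def
  proof
    fix A :: "'a set" assume A: "A \<in> null_sets lborel"
    then have As: "A \<in> sets lborel" by auto
    have "ball c \<delta> \<inter> A \<in> null_sets lborel"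
      using A by (rule null_set_Int1) simp
    then have "emeasure lborel (ball c \<delta> \<inter> A) = 0" by auto
    then have "emeasure (uniform_measure lborel (ball c \<delta>)) A = 0"
      using As by simp
    then show "A \<in> null_sets (uniform_measure lborel (ball c \<delta>))"
      using As by (simp add: null_sets_def)
  qed
  show ?thesis unfolding admissible_measure_def using ps ac by simp
qed

lemma unif_meets:
  fixes c :: "'a::euclidean_space"
  assumes "measure (uniform_measure lborel (ball c \<delta>)) A \<noteq> 0"
  shows "A \<inter> ball c \<delta> \<noteq> {}"
proof
  assume e: "A \<inter> ball c \<delta> = {}"
  show False
  proof (cases "A \<in> sets lborel")
    case True
    have "emeasure (uniform_measure lborel (ball c \<delta>)) A = 0"
      using True e by (simp add: Int_commute)
    then have "measure (uniform_measure lborel (ball c \<delta>)) A = 0" by (simp add: measure_def)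
    then show False using assms by simp
  next
    case False
    then have "A \<notin> sets (uniform_measure lborel (ball c \<delta>))" by simp
    then have "measure (uniform_measure lborel (ball c \<delta>)) A = 0" by (rule measure_notin_sets)
    then show False using assms by simp
  qed
qed

lemma fsp_bound:
  assumes fs: "fair_split_property n r m TYPE('a::euclidean_space)" and r: "1 \<le> r"
  shows "m * r \<le> m + DIM('a) * (n - 1)"
proof -
  obtain p :: "nat \<Rightarrow> 'a" where gp: "\<forall>T \<subseteq> {..<m}. card T \<le> DIM('a) + 1 \<longrightarrow>
      inj_on p T \<and> \<not> affine_dependent (p ` T)" using gp_points by blast
  obtain \<delta> where dpos: "0 < \<delta>" and near: "\<forall>a b. norm a = 1 \<longrightarrow> card {j. j < m \<and> \<bar>a \<bullet> p j - b\<bar> < \<delta>} \<le> DIM('a)"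
    using delta_points[OF gp] by blast
  define \<mu> where "\<mu> = (\<lambda>j. uniform_measure lborel (ball (p j) \<delta>))"
  have adm: "\<forall>j<m. admissible_measure (\<mu> j)" unfolding \<mu>_def using unif_adm[OF dpos] by blast
  obtain Ks lab where hc: "hcut_partition Ks" and len: "length Ks = n" and lab: "\<forall>i<n. lab i < r"
    and eq: "\<forall>j<m. \<forall>s<r. measure (\<mu> j) (\<Union>i\<in>{i. i < n \<and> lab i = s}. Ks ! i) = 1 / real r"
    using fs adm unfolding fair_split_property_def by blast
  have each: "r \<le> cntB (ball (p j) \<delta>) Ks" if j: "j < m" for j
  proof -
    let ?I = "{i. i < length Ks \<and> Ks ! i \<inter> ball (p j) \<delta> \<noteq> {}}"
    have "{..<r} \<subseteq> lab ` ?I"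
    proof
      fix s assume s: "s \<in> {..<r}"
      then have "measure (\<mu> j) (\<Union>i\<in>{i. i < n \<and> lab i = s}. Ks ! i) = 1 / real r"
        using eq j by simp
      moreover have "1 / real r \<noteq> 0" using r by simp
      ultimately have "(\<Union>i\<in>{i. i < n \<and> lab i = s}. Ks ! i) \<inter> ball (p j) \<delta> \<noteq> {}"
        unfolding \<mu>_def by (intro unif_meets) simp
      then obtain i where "i < n" "lab i = s" "Ks ! i \<inter> ball (p j) \<delta> \<noteq> {}" by blast
      then show "s \<in> lab ` ?I" using len by blast
    qed
    then have "card {..<r} \<le> card (lab ` ?I)" by (intro card_mono) auto
    also have "\<dots> \<le> card ?I" by (rule card_image_le) simp
    finally show ?thesis by (simp add: cntB_card)
  qed
  have "m * r = (\<Sum>j<m. r)" by simp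
  also have "\<dots> \<le> (\<Sum>j<m. cntB (ball (p j) \<delta>) Ks)" by (intro sum_mono each) simp
  also have "\<dots> \<le> m + DIM('a) * (length Ks - 1)" by (rule count_bound[OF near hc])
  finally show ?thesis using len by simp
qed

lemma exists_partition: "\<exists>Ks :: 'a::euclidean_space set list. hcut_partition Ks \<and> length Ks = Suc k"
proof (induction k)
  case 0
  show ?case using hcut_partition.base by fastforce
next
  case (Suc k)
  then obtain Ks :: "'a set list" where Ks: "hcut_partition Ks" "length Ks = Suc k" by blast
  obtain e :: 'a where e: "e \<in> Basis" using nonempty_Basis by blast
  then have e0: "e \<noteq> 0" by auto
  have "hcut_partition (Ks[0 := Ks ! 0 \<inter> {x. e \<bullet> x \<le> 0}] @ [Ks ! 0 \<inter> {x. e \<bullet> x \<ge> 0}])"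
    using hcut_partition.cut[OF Ks(1) _ e0] Ks(2) by simp
  moreover have "length (Ks[0 := Ks ! 0 \<inter> {x. e \<bullet> x \<le> 0}] @ [Ks ! 0 \<inter> {x. e \<bullet> x \<ge> 0}]) = Suc (Suc k)"
    using Ks(2) by simp
  ultimately show ?case by blast
qed

theorem mainTheorem3:
  assumes "n \<ge> 1" and "r \<ge> 2"
  shows "int (Mpp n r TYPE('a::euclidean_space))
           \<le> \<lfloor> real DIM('a) * (real n - 1) / (real r - 1) \<rfloor>"
proof -
  let ?P = "\<lambda>m. fair_split_property n r m TYPE('a)"
  let ?d = "DIM('a)"
  obtain Ks :: "'a set list" where Ks: "hcut_partition Ks" "length Ks = Suc (n - 1)"
    using exists_partition by blast
  have P0: "?P 0" unfolding fair_split_property_def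
  proof (intro allI impI)
    fix \<mu> :: "nat \<Rightarrow> 'a measure"
    show "\<exists>Ks lab. hcut_partition Ks \<and> length Ks = n \<and> (\<forall>i<n. lab i < r) \<and>
           (\<forall>j<0. \<forall>s<r. measure (\<mu> j) (\<Union>i\<in>{i. i < n \<and> lab i = s}. Ks ! i) = 1 / real r)"
      using Ks assms by (intro exI[of _ Ks] exI[of _ "\<lambda>_. 0"]) auto
  qed
  have bnd: "y * (r - 1) \<le> ?d * (n - 1)" if "?P y" for y
  proof -
    have "y * r \<le> y + ?d * (n - 1)" using fsp_bound[OF that] assms by simp
    moreover have "y * r = y * (r - 1) + y" using assms by (cases r) (auto simp: algebra_simps)
    ultimately show ?thesis by linarith
  qed
  have bnd2: "y \<le> ?d * (n - 1)" if "?P y" for y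
  proof -
    have "1 \<le> r - 1" using assms by simp
    then have "y * 1 \<le> y * (r - 1)" by (rule mult_le_mono2)
    then have "y \<le> y * (r - 1)" by simp
    then show ?thesis using bnd[OF that] by linarith
  qed
  have PG: "?P (Mpp n r TYPE('a))" unfolding Mpp_def
    by (rule GreatestI_nat[of ?P 0 "?d * (n - 1)"]) (use P0 bnd2 in auto)
  define G where "G = Mpp n r TYPE('a)"
  have GB: "G * (r - 1) \<le> ?d * (n - 1)" using bnd PG by (simp add: G_def)
  have r1: "real r - 1 > 0" using assms by simp
  have "real G * (real r - 1) \<le> real ?d * (real n - 1)"
  proof -
    have "real (G * (r - 1)) \<le> real (?d * (n - 1))" using GB by (simp only: of_nat_le_iff)
    then show ?thesis using assms by (simp add: of_nat_diff)
  qed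
  then have "real G \<le> real ?d * (real n - 1) / (real r - 1)"
    using r1 by (simp add: pos_le_divide_eq)
  then have "int G \<le> \<lfloor>real ?d * (real n - 1) / (real r - 1)\<rfloor>"
    by (simp add: le_floor_iff)
  then show ?thesis by (simp add: G_def)
qed

end
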